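(* Let $\ell\ge5$, let $G$ be an $\ell$-holed graph, and let $(A,B,P_1,\dots,P_4)$ be a $4$-bar gate in $G$, where $P_i$ has ends $a_i\in V(A)$, $b_i\in V(B)$. Define $d(1,2,3,4)=d_A(a_1,a_2)+d_A(a_3,a_4)$, $d(1,3,2,4)=d_A(a_1,a_3)+d_A(a_2,a_4)$ and $d(1,4,2,3)=d_A(a_1,a_4)+d_A(a_2,a_3)$. Then two of $d(1,2,3,4),d(1,3,2,4),d(1,4,2,3)$ are equal and the third is at most one more.
   Context: A hole is an induced cycle of length at least four; $G$ is $\ell$-holed if all holes have length exactly $\ell$. $d_A$ denotes distance in $A$. A $4$-bar semigate in $G$ is a tuple $(A,B,P_1,\dots,P_4)$ of induced subgraphs such that: $A,B$ are vertex-disjoint connected subgraphs; each $P_i$ is a path with ends $a_i,b_i$, $V(P_i\cap A)=\{a_i\}$, $V(P_i\cap B)=\{b_i\}$; the $P_i$ are distinct and $V(P_i\cap P_j)=\{a_i,b_i\}\cap\{a_j,b_j\}$ for $i<j$; each vertex of $A$ has at most one neighbour in $V(B)$ and vice versa; and $A\cup B\cup P_1\cup\dots\cup P_4$ is induced. A semigate $(A',B',P'_1,\dots,P'_4)$ is strictly better than $(A,B,P_1,\dots,P_4)$ if $A'\subseteq A$, $B'\subseteq B$, $P_i\subseteq P'_i$ for all $i$, and $A'\ne A$ or $B'\ne B$. A $4$-bar gate is a $4$-bar semigate with no strictly better $4$-bar semigate. *)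

theory Defs
  imports Main
begin

text \<open>A finite simple graph: vertex set V, symmetric irreflexive adjacency E on V.
  Induced subgraphs are represented by their vertex sets.\<close>

definition graph :: "'a set \<Rightarrow> ('a \<Rightarrow> 'a \<Rightarrow> bool) \<Rightarrow> bool" where
  "graph V E \<longleftrightarrow> finite V \<and> (\<forall>x y. E x y \<longrightarrow> E y x) \<and> (\<forall>x. \<not> E x x)
     \<and> (\<forall>x y. E x y \<longrightarrow> x \<in> V \<and> y \<in> V)"

definition is_hole :: "'a set \<Rightarrow> ('a \<Rightarrow> 'a \<Rightarrow> bool) \<Rightarrow> 'a list \<Rightarrow> bool" where
  "is_hole V E cs \<longleftrightarrow> distinct cs \<and> length cs \<ge> 4 \<and> set cs \<subseteq> V \<and>
     (\<forall>i < length cs. \<forall>j < length cs.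
        E (cs ! i) (cs ! j) \<longleftrightarrow> (j = Suc i mod length cs \<or> i = Suc j mod length cs))"

definition holed :: "nat \<Rightarrow> 'a set \<Rightarrow> ('a \<Rightarrow> 'a \<Rightarrow> bool) \<Rightarrow> bool" where
  "holed l V E \<longleftrightarrow> (\<forall>cs. is_hole V E cs \<longrightarrow> length cs = l)"

definition connected_set :: "('a \<Rightarrow> 'a \<Rightarrow> bool) \<Rightarrow> 'a set \<Rightarrow> bool" where
  "connected_set E X \<longleftrightarrow> X \<noteq> {} \<and>
     (\<forall>u\<in>X. \<forall>v\<in>X. (\<lambda>x y. E x y \<and> x \<in> X \<and> y \<in> X)\<^sup>*\<^sup>* u v)"

definition is_path_ends :: "('a \<Rightarrow> 'a \<Rightarrow> bool) \<Rightarrow> 'a set \<Rightarrow> 'a \<Rightarrow> 'a \<Rightarrow> bool" where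
  "is_path_ends E P a b \<longleftrightarrow> (\<exists>xs. xs \<noteq> [] \<and> distinct xs \<and> set xs = P \<and>
     hd xs = a \<and> last xs = b \<and>
     (\<forall>i < length xs. \<forall>j < length xs. E (xs ! i) (xs ! j) \<longleftrightarrow> (j = Suc i \<or> i = Suc j)))"

definition walk_in :: "('a \<Rightarrow> 'a \<Rightarrow> bool) \<Rightarrow> 'a set \<Rightarrow> 'a \<Rightarrow> 'a \<Rightarrow> nat \<Rightarrow> bool" where
  "walk_in E X u v n \<longleftrightarrow> (\<exists>xs. length xs = Suc n \<and> set xs \<subseteq> X \<and> hd xs = u \<and> last xs = v \<and>
     (\<forall>i < n. E (xs ! i) (xs ! Suc i)))"

definition dist_in :: "('a \<Rightarrow> 'a \<Rightarrow> bool) \<Rightarrow> 'a set \<Rightarrow> 'a \<Rightarrow> 'a \<Rightarrow> nat" where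
  "dist_in E X u v = (LEAST n. walk_in E X u v n)"

definition semigate4 :: "'a set \<Rightarrow> ('a \<Rightarrow> 'a \<Rightarrow> bool) \<Rightarrow> 'a set \<Rightarrow> 'a set \<Rightarrow> (nat \<Rightarrow> 'a set) \<Rightarrow> bool" where
  "semigate4 V E A B P \<longleftrightarrow>
     A \<subseteq> V \<and> B \<subseteq> V \<and> (\<forall>i\<in>{1..4}. P i \<subseteq> V) \<and>
     A \<inter> B = {} \<and> connected_set E A \<and> connected_set E B \<and>
     (\<exists>a b. (\<forall>i\<in>{1..4}. is_path_ends E (P i) (a i) (b i) \<and>
                         P i \<inter> A = {a i} \<and> P i \<inter> B = {b i}) \<and>
            (\<forall>i\<in>{1..4}. \<forall>j\<in>{1..4}. i < j \<longrightarrow>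
                P i \<noteq> P j \<and> P i \<inter> P j = {a i, b i} \<inter> {a j, b j})) \<and>
     (\<forall>x\<in>A. \<forall>y\<in>B. \<forall>y'\<in>B. E x y \<and> E x y' \<longrightarrow> y = y') \<and>
     (\<forall>y\<in>B. \<forall>x\<in>A. \<forall>x'\<in>A. E y x \<and> E y x' \<longrightarrow> x = x') \<and>
     (\<forall>u v. E u v \<and> u \<in> A \<union> B \<union> (\<Union>i\<in>{1..4}. P i) \<and> v \<in> A \<union> B \<union> (\<Union>i\<in>{1..4}. P i)
        \<longrightarrow> (u \<in> A \<and> v \<in> A) \<or> (u \<in> B \<and> v \<in> B) \<or> (\<exists>i\<in>{1..4}. u \<in> P i \<and> v \<in> P i))"

definition strictly_better4 :: "'a set \<Rightarrow> 'a set \<Rightarrow> (nat \<Rightarrow> 'a set) \<Rightarrow> 'a set \<Rightarrow> 'a set \<Rightarrow> (nat \<Rightarrow> 'a set) \<Rightarrow> bool" where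
  "strictly_better4 A' B' P' A B P \<longleftrightarrow>
     A' \<subseteq> A \<and> B' \<subseteq> B \<and> (\<forall>i\<in>{1..4}. P i \<subseteq> P' i) \<and> (A' \<noteq> A \<or> B' \<noteq> B)"

definition gate4 :: "'a set \<Rightarrow> ('a \<Rightarrow> 'a \<Rightarrow> bool) \<Rightarrow> 'a set \<Rightarrow> 'a set \<Rightarrow> (nat \<Rightarrow> 'a set) \<Rightarrow> bool" where
  "gate4 V E A B P \<longleftrightarrow> semigate4 V E A B P \<and>
     \<not> (\<exists>A' B' P'. semigate4 V E A' B' P' \<and> strictly_better4 A' B' P' A B P)"

end

theory Submission
  imports Defs
begin


definition wlk where
  "wlk E X u v n xs \<longleftrightarrow> length xs = Suc n \<and> set xs \<subseteq> X \<and> hd xs = u \<and> last xs = v \<and> successively E xs"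

lemma walk_in_wlk: "walk_in E X u v n \<longleftrightarrow> (\<exists>xs. wlk E X u v n xs)"
  unfolding walk_in_def wlk_def successively_conv_nth by auto

definition reach where
  "reach E X u v \<longleftrightarrow> (\<lambda>x y. E x y \<and> x \<in> X \<and> y \<in> X)\<^sup>*\<^sup>* u v"

lemma conn_iff: "connected_set E X \<longleftrightarrow> X \<noteq> {} \<and> (\<forall>u\<in>X. \<forall>v\<in>X. reach E X u v)"
  unfolding connected_set_def reach_def by simp

lemma reach_sym:
  assumes sym: "\<forall>x y. E x y \<longrightarrow> E y x" and r: "reach E X u v"
  shows "reach E X v u"
proof -
  have "symp (\<lambda>x y. E x y \<and> x \<in> X \<and> y \<in> X)" using sym by (auto simp: symp_def)
  then show ?thesis using r unfolding reach_def by (meson sympD symp_rtranclp)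
qed

lemma reach_trans: "reach E X u v \<Longrightarrow> reach E X v w \<Longrightarrow> reach E X u w"
  unfolding reach_def by (rule rtranclp_trans)

lemma reach_refl: "reach E X u u"
  unfolding reach_def by simp

lemma reach_edge: "E u v \<Longrightarrow> u \<in> X \<Longrightarrow> v \<in> X \<Longrightarrow> reach E X u v"
  unfolding reach_def by auto

lemma reach_mono: "reach E X u v \<Longrightarrow> X \<subseteq> Y \<Longrightarrow> reach E Y u v"
  unfolding reach_def by (erule rtranclp_mono[THEN predicate2D, rotated]) auto

lemma reach_list: "successively E xs \<Longrightarrow> xs \<noteq> [] \<Longrightarrow> set xs \<subseteq> X \<Longrightarrow> reach E X (hd xs) (last xs)"
proof (induction xs)
  case Nil then show ?case by simp
next
  case (Cons x xs)
  show ?case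
  proof (cases xs)
    case Nil then show ?thesis by (simp add: reach_refl)
  next
    case (Cons y ys)
    then have "E x y" "successively E xs" using Cons.prems by auto
    then have "reach E X (hd xs) (last xs)" using Cons.IH Cons.prems \<open>xs = y # ys\<close> by auto
    moreover have "reach E X x y" using \<open>E x y\<close> Cons.prems \<open>xs = y # ys\<close> by (intro reach_edge) auto
    ultimately show ?thesis using \<open>xs = y # ys\<close> by (auto intro: reach_trans)
  qed
qed

lemma wlk_reach: "wlk E X u v n xs \<Longrightarrow> reach E X u v"
  unfolding wlk_def using reach_list[of E xs X] by fastforce

lemma walk_reach: "walk_in E X u v n \<Longrightarrow> reach E X u v"
  using walk_in_wlk wlk_reach by metis

lemma walk_refl: "u \<in> X \<Longrightarrow> walk_in E X u u 0"
  unfolding walk_in_wlk wlk_def by (rule exI[of _ "[u]"]) auto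

lemma walk_edge: "E u v \<Longrightarrow> u \<in> X \<Longrightarrow> v \<in> X \<Longrightarrow> walk_in E X u v 1"
  unfolding walk_in_wlk wlk_def by (rule exI[of _ "[u,v]"]) auto

lemma walk_trans:
  assumes "walk_in E X u v n" "walk_in E X v w k"
  shows "walk_in E X u w (n + k)"
proof -
  obtain xs where xs: "wlk E X u v n xs" using assms(1) walk_in_wlk by metis
  obtain ys where ys: "wlk E X v w k ys" using assms(2) walk_in_wlk by metis
  obtain y ys' where ysc: "ys = y # ys'" using ys unfolding wlk_def by (cases ys) auto
  have "wlk E X u w (n + k) (xs @ ys')"
  proof -
    have l: "length (xs @ ys') = Suc (n + k)" using xs ys ysc unfolding wlk_def by auto
    have s: "set (xs @ ys') \<subseteq> X" using xs ys ysc unfolding wlk_def by auto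
    have h: "hd (xs @ ys') = u" using xs unfolding wlk_def by (cases xs) auto
    have la: "last (xs @ ys') = w"
    proof (cases "ys' = []")
      case True then show ?thesis using xs ys ysc unfolding wlk_def by auto
    next
      case False then show ?thesis using ys ysc unfolding wlk_def by auto
    qed
    have "successively E (xs @ ys')"
    proof -
      have "successively E ys'" using ys ysc unfolding wlk_def by (auto simp: successively_Cons)
      moreover have "ys' \<noteq> [] \<Longrightarrow> E (last xs) (hd ys')"
        using ys ysc xs unfolding wlk_def by (auto simp: successively_Cons)
      ultimately show ?thesis using xs unfolding wlk_def by (auto simp: successively_append_iff)
    qed
    then show ?thesis using l s h la unfolding wlk_def by auto
  qed
  then show ?thesis using walk_in_wlk by metis
qed

lemma walk_sym:
  assumes sym: "\<forall>x y. E x y \<longrightarrow> E y x" and "walk_in E X u v n"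
  shows "walk_in E X v u n"
proof -
  obtain xs where xs: "wlk E X u v n xs" using assms(2) walk_in_wlk by metis
  have "wlk E X v u n (rev xs)"
    using xs sym unfolding wlk_def
    by (auto simp: hd_rev last_rev elim: successively_mono)
  then show ?thesis using walk_in_wlk by metis
qed

lemma walk_split:
  assumes "wlk E X u v n xs" "k \<le> n"
  shows "walk_in E X u (xs ! k) k" "walk_in E X (xs ! k) v (n - k)"
proof -
  have L: "length xs = Suc n" and S: "set xs \<subseteq> X" and H: "hd xs = u" and La: "last xs = v"
    and Sc: "\<forall>i. Suc i < length xs \<longrightarrow> E (xs ! i) (xs ! Suc i)"
    using assms(1) unfolding wlk_def successively_conv_nth by auto
  have lt: "last (take (Suc k) xs) = xs ! k"
    using L assms(2) by (subst last_conv_nth) auto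
  show "walk_in E X u (xs ! k) k"
    unfolding walk_in_def
    apply (rule exI[of _ "take (Suc k) xs"])
    using L S H Sc assms(2) lt by (auto simp: hd_conv_nth dest: in_set_takeD)
  show "walk_in E X (xs ! k) v (n - k)"
    unfolding walk_in_def
    apply (rule exI[of _ "drop k xs"])
    using L S La Sc assms(2) by (auto simp: hd_drop_conv_nth dest: in_set_dropD)
qed

lemma reach_walk: "reach E X u v \<Longrightarrow> u \<in> X \<Longrightarrow> \<exists>n. walk_in E X u v n"
  unfolding reach_def
proof (induction rule: rtranclp_induct)
  case base then show ?case using walk_refl by metis
next
  case (step y z)
  then obtain n where "walk_in E X u y n" by auto
  moreover have "walk_in E X y z 1" using step by (intro walk_edge) auto
  ultimately show ?case using walk_trans by metis
qed



lemma conn_list: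
  assumes sym: "\<forall>x y. E x y \<longrightarrow> E y x" and w: "wlk E X u v n xs"
  shows "connected_set E (set xs)"
proof -
  have ne: "xs \<noteq> []" using w unfolding wlk_def by auto
  have Sc: "successively E xs" using w unfolding wlk_def by auto
  have r: "reach E (set xs) (hd xs) (xs ! k)" if "k < length xs" for k
  proof -
    have "successively E (take (Suc k) xs)"
      using Sc unfolding successively_conv_nth by auto
    moreover have "take (Suc k) xs \<noteq> []" using ne by simp
    moreover have "set (take (Suc k) xs) \<subseteq> set xs" by (rule set_take_subset)
    ultimately have "reach E (set xs) (hd (take (Suc k) xs)) (last (take (Suc k) xs))"
      by (rule reach_list)
    moreover have "last (take (Suc k) xs) = xs ! k" using that by (subst last_conv_nth) auto
    moreover have "hd (take (Suc k) xs) = hd xs" using ne by (cases xs) auto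
    ultimately show ?thesis by simp
  qed
  show ?thesis unfolding conn_iff
  proof (intro conjI ballI)
    show "set xs \<noteq> {}" using ne by simp
    fix a b assume "a \<in> set xs" "b \<in> set xs"
    then obtain i j where "i < length xs" "a = xs ! i" "j < length xs" "b = xs ! j"
      by (auto simp: in_set_conv_nth)
    then show "reach E (set xs) a b" using r reach_sym[OF sym] reach_trans by metis
  qed
qed

lemma conn_union:
  assumes sym: "\<forall>x y. E x y \<longrightarrow> E y x"
    and X: "connected_set E X" and Y: "connected_set E Y"
    and link: "\<exists>x\<in>X. \<exists>y\<in>Y. x = y \<or> E x y"
  shows "connected_set E (X \<union> Y)"
proof -
  obtain x y where xy: "x \<in> X" "y \<in> Y" "reach E (X \<union> Y) x y"
    using link by (auto intro: reach_refl reach_edge)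
  have RX: "reach E (X \<union> Y) a b" if "a \<in> X" "b \<in> X" for a b
    using X that unfolding conn_iff by (auto intro: reach_mono)
  have RY: "reach E (X \<union> Y) a b" if "a \<in> Y" "b \<in> Y" for a b
    using Y that unfolding conn_iff by (auto intro: reach_mono)
  have RXY: "reach E (X \<union> Y) a b" if "a \<in> X" "b \<in> Y" for a b
    using RX[OF that(1) xy(1)] xy(3) RY[OF xy(2) that(2)] reach_trans by metis
  show ?thesis unfolding conn_iff
  proof (intro conjI ballI)
    show "X \<union> Y \<noteq> {}" using X unfolding conn_iff by auto
    fix a b assume "a \<in> X \<union> Y" "b \<in> X \<union> Y"
    then show "reach E (X \<union> Y) a b"
      using RX RY RXY reach_sym[OF sym] by blast
  qed
qed

context
  fixes E :: "'a \<Rightarrow> 'a \<Rightarrow> bool" and A :: "'a set"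
  assumes sym: "\<forall>x y. E x y \<longrightarrow> E y x" and conn: "connected_set E A"
begin

abbreviation "D \<equiv> dist_in E A"

lemma conn_walk: "u \<in> A \<Longrightarrow> v \<in> A \<Longrightarrow> \<exists>n. walk_in E A u v n"
  using conn reach_walk unfolding conn_iff by metis

lemma dist_walk: "u \<in> A \<Longrightarrow> v \<in> A \<Longrightarrow> walk_in E A u v (D u v)"
  unfolding dist_in_def using conn_walk by (metis LeastI_ex)

lemma dist_le: "walk_in E A u v n \<Longrightarrow> D u v \<le> n"
  unfolding dist_in_def by (rule Least_le)

lemma dist_sym: "D u v = D v u"
proof -
  have "walk_in E A u v n = walk_in E A v u n" for n
    using walk_sym[OF sym] by metis
  then have "walk_in E A u v = walk_in E A v u" by (rule ext)
  then show ?thesis unfolding dist_in_def by simp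
qed

lemma dist_tri: "u \<in> A \<Longrightarrow> v \<in> A \<Longrightarrow> w \<in> A \<Longrightarrow> D u w \<le> D u v + D v w"
  using dist_walk dist_le walk_trans by metis

lemma dist_edge: "E u v \<Longrightarrow> u \<in> A \<Longrightarrow> v \<in> A \<Longrightarrow> D u v \<le> 1"
  using dist_le walk_edge by metis

lemma geo_exists: "u \<in> A \<Longrightarrow> v \<in> A \<Longrightarrow> \<exists>xs. wlk E A u v (D u v) xs"
  using dist_walk walk_in_wlk by metis

lemma wlk_in: "wlk E A u v n xs \<Longrightarrow> x \<in> set xs \<Longrightarrow> x \<in> A"
  unfolding wlk_def by auto

lemma geo_idx:
  assumes g: "wlk E A u v (D u v) xs" and k: "k \<le> D u v"
  shows "D u (xs ! k) = k" "D (xs ! k) v = D u v - k"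
proof -
  have w1: "walk_in E A u (xs ! k) k" and w2: "walk_in E A (xs ! k) v (D u v - k)"
    using walk_split[OF g k] by auto
  have L: "length xs = Suc (D u v)" and S: "set xs \<subseteq> A" and H: "hd xs = u" and La: "last xs = v"
    using g unfolding wlk_def by auto
  have ne: "xs \<noteq> []" using L by auto
  have inA: "u \<in> A" "v \<in> A" "xs ! k \<in> A"
    using S H La ne hd_in_set[OF ne] last_in_set[OF ne] nth_mem[of k xs] k L by auto
  have a: "D u (xs ! k) \<le> k" using dist_le w1 by auto
  have b: "D (xs ! k) v \<le> D u v - k" using dist_le w2 by auto
  have c: "D u v \<le> D u (xs ! k) + D (xs ! k) v" using dist_tri inA by auto
  show "D u (xs ! k) = k" "D (xs ! k) v = D u v - k" using a b c k by auto
qed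

lemma geo_mem:
  assumes g: "wlk E A u v (D u v) xs" and x: "x \<in> set xs"
  shows "x = xs ! (D u x)" "D u x \<le> D u v" "D x v = D u v - D u x"
proof -
  obtain k where k: "k < length xs" "x = xs ! k" using x by (auto simp: in_set_conv_nth)
  have kl: "k \<le> D u v" using k g unfolding wlk_def by auto
  have "D u x = k" using geo_idx[OF g kl] k by simp
  then show "x = xs ! (D u x)" "D u x \<le> D u v" "D x v = D u v - D u x"
    using geo_idx[OF g kl] k kl by auto
qed

lemma geo_adj:
  assumes g: "wlk E A u v n xs" and k: "k < n"
  shows "E (xs ! k) (xs ! Suc k)"
  using g k unfolding wlk_def successively_conv_nth by auto

lemma crossing:
  assumes u: "u \<in> X" "u \<in> A" and v: "v \<in> A" "v \<notin> X"
  shows "\<exists>x y. x \<in> X \<and> x \<in> A \<and> y \<in> A \<and> y \<notin> X \<and> E x y \<and> D u v = D u x + 1 + D y v"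
proof -
  obtain xs where g: "wlk E A u v (D u v) xs" using geo_exists u v by metis
  have L: "length xs = Suc (D u v)" and h0: "hd xs = u" and la0: "last xs = v"
    using g unfolding wlk_def by auto
  have h: "xs ! 0 = u" using L h0 by (cases xs) auto
  have "last xs = xs ! (length xs - 1)" by (rule last_conv_nth) (use L in auto)
  then have la: "xs ! D u v = v" using L la0 by simp
  define k where "k = (LEAST k. xs ! k \<notin> X)"
  have kex: "xs ! k \<notin> X" unfolding k_def using la v by (metis LeastI)
  have kle: "k \<le> D u v" unfolding k_def using la v by (metis Least_le)
  have k0: "k \<noteq> 0" using kex h u by (metis)
  have km: "xs ! (k - 1) \<in> X"
  proof (rule ccontr)
    assume "xs ! (k - 1) \<notin> X"
    then have "k \<le> k - 1" unfolding k_def by (rule Least_le)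
    then show False using k0 by simp
  qed
  have e: "E (xs ! (k - 1)) (xs ! k)" using geo_adj[OF g, of "k - 1"] k0 kle by auto
  have d1: "D u (xs ! (k - 1)) = k - 1" using geo_idx[OF g, of "k - 1"] kle by auto
  have d2: "D (xs ! k) v = D u v - k" using geo_idx[OF g kle] by auto
  have S: "set xs \<subseteq> A" using g unfolding wlk_def by auto
  have inA: "xs ! (k - 1) \<in> A" "xs ! k \<in> A"
    using S nth_mem[of k xs] nth_mem[of "k - 1" xs] kle L by auto
  show ?thesis
    apply (rule exI[of _ "xs ! (k - 1)"], rule exI[of _ "xs ! k"])
    using km kex e d1 d2 inA k0 kle by auto
qed

end


lemma semi_parts:
  assumes "semigate4 V E A B P"
  shows "A \<subseteq> V" "B \<subseteq> V" "\<forall>i\<in>{1..4}. P i \<subseteq> V" "A \<inter> B = {}" "connected_set E A" "connected_set E B"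
    "\<exists>a b. (\<forall>i\<in>{1..4}. is_path_ends E (P i) (a i) (b i) \<and>
                         P i \<inter> A = {a i} \<and> P i \<inter> B = {b i}) \<and>
            (\<forall>i\<in>{1..4}. \<forall>j\<in>{1..4}. i < j \<longrightarrow>
                P i \<noteq> P j \<and> P i \<inter> P j = {a i, b i} \<inter> {a j, b j})"
    "\<forall>x\<in>A. \<forall>y\<in>B. \<forall>y'\<in>B. E x y \<and> E x y' \<longrightarrow> y = y'"
    "\<forall>y\<in>B. \<forall>x\<in>A. \<forall>x'\<in>A. E y x \<and> E y x' \<longrightarrow> x = x'"
    "\<forall>u v. E u v \<and> u \<in> A \<union> B \<union> (\<Union>i\<in>{1..4}. P i) \<and> v \<in> A \<union> B \<union> (\<Union>i\<in>{1..4}. P i)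
        \<longrightarrow> (u \<in> A \<and> v \<in> A) \<or> (u \<in> B \<and> v \<in> B) \<or> (\<exists>i\<in>{1..4}. u \<in> P i \<and> v \<in> P i)"
  using assms unfolding semigate4_def by - (elim conjE, assumption)+

lemma gate_min:
  assumes G: "graph V E" and gate: "gate4 V E A B P"
    and aP: "\<forall>i\<in>{1..4}. P i \<inter> A = {a i}"
    and CA: "C \<subseteq> A" and Cc: "connected_set E C" and aC: "\<forall>i\<in>{1..4}. a i \<in> C"
  shows "C = A"
proof (rule ccontr)
  assume neq: "C \<noteq> A"
  have sym: "\<forall>x y. E x y \<longrightarrow> E y x" using G unfolding graph_def by auto
  have semi: "semigate4 V E A B P" using gate unfolding gate4_def by auto
  have conn: "connected_set E A" using semi_parts[OF semi] by blast
  have AV: "A \<subseteq> V" using semi_parts[OF semi] by blast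
  have fin: "finite A" using AV G unfolding graph_def by (auto intro: finite_subset)
  obtain c0 where c0: "c0 \<in> C" using Cc unfolding conn_iff by auto
  define g where "g w = (LEAST n. \<exists>c\<in>C. walk_in E A w c n)" for w
  have gex: "\<exists>c\<in>C. walk_in E A w c (g w)" if "w \<in> A" for w
  proof -
    have "\<exists>n. \<exists>c\<in>C. walk_in E A w c n" using conn_walk[OF sym conn that, of c0] c0 CA by auto
    then show ?thesis unfolding g_def by (rule LeastI_ex)
  qed
  have gle: "g w \<le> n" if "c \<in> C" "walk_in E A w c n" for w c n
    unfolding g_def using that by (auto intro: Least_le)
  define M where "M = A - C"
  have Mne: "M \<noteq> {}" using neq CA unfolding M_def by auto
  have Mfin: "finite M" using fin unfolding M_def by auto
  have "Max (g ` M) \<in> g ` M" by (rule Max_in) (use Mfin Mne in auto)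
  then obtain v where vM: "v \<in> M" and gv: "g v = Max (g ` M)" by auto
  have vmax: "\<forall>w\<in>M. g w \<le> g v" unfolding gv using Mfin by auto
  have vA: "v \<in> A" and vC: "v \<notin> C" using vM unfolding M_def by auto
  have CAv: "C \<subseteq> A - {v}" using CA vC by auto
  have toc: "reach E (A - {v}) w c0" if w: "w \<in> A - {v}" for w
  proof (cases "w \<in> C")
    case True
    then show ?thesis using Cc c0 CAv unfolding conn_iff by (auto intro: reach_mono)
  next
    case False
    then have wM: "w \<in> M" using w unfolding M_def by auto
    obtain c where c: "c \<in> C" "walk_in E A w c (g w)" using gex w by auto
    then obtain xs where xs: "wlk E A w c (g w) xs" using walk_in_wlk by metis
    have L: "length xs = Suc (g w)" and h0: "hd xs = w" and S: "set xs \<subseteq> A"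
      using xs unfolding wlk_def by auto
    have h: "xs ! 0 = w" using L h0 by (cases xs) auto
    have nv: "xs ! k \<noteq> v" if k: "k \<le> g w" for k
    proof (cases "k = 0")
      case True then show ?thesis using h w by auto
    next
      case False
      show ?thesis
      proof
        assume eq: "xs ! k = v"
        have "walk_in E A (xs ! k) c (g w - k)" using walk_split(2)[OF xs k] .
        then have "g v \<le> g w - k" using gle c eq by auto
        moreover have "g w \<le> g v" using vmax wM by auto
        ultimately show False using False k by auto
      qed
    qed
    have "set xs \<subseteq> A - {v}"
    proof
      fix x assume "x \<in> set xs"
      then obtain k where "k < length xs" "x = xs ! k" by (auto simp: in_set_conv_nth)
      then show "x \<in> A - {v}" using nv[of k] L S by auto
    qed
    then have "wlk E (A - {v}) w c (g w) xs" using xs unfolding wlk_def by auto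
    then have "reach E (A - {v}) w c" by (rule wlk_reach)
    moreover have "reach E (A - {v}) c c0" using Cc c c0 CAv unfolding conn_iff by (auto intro: reach_mono)
    ultimately show ?thesis by (rule reach_trans)
  qed
  have connv: "connected_set E (A - {v})"
    unfolding conn_iff
  proof (intro conjI ballI)
    show "A - {v} \<noteq> {}" using c0 CAv by auto
    fix x y assume "x \<in> A - {v}" "y \<in> A - {v}"
    then show "reach E (A - {v}) x y" using toc reach_sym[OF sym] reach_trans by metis
  qed
  have semi2: "semigate4 V E (A - {v}) B P"
  proof -
    note sp = semi_parts[OF semi]
    obtain a' b' where ab: "\<forall>i\<in>{1..4}. is_path_ends E (P i) (a' i) (b' i) \<and>
                         P i \<inter> A = {a' i} \<and> P i \<inter> B = {b' i}"
        "\<forall>i\<in>{1..4}. \<forall>j\<in>{1..4}. i < j \<longrightarrow>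
                P i \<noteq> P j \<and> P i \<inter> P j = {a' i, b' i} \<inter> {a' j, b' j}"
      using sp(7) by blast
    have aa: "a' i = a i" if "i \<in> {1..4}" for i using ab(1) aP that by blast
    have av: "a' i \<noteq> v" if "i \<in> {1..4}" for i using aa[OF that] aC that vC by auto
    have pv: "v \<notin> P i" if "i \<in> {1..4}" for i
    proof
      assume "v \<in> P i"
      then have "v \<in> P i \<inter> A" using vA by blast
      then have "v = a' i" using ab(1) that by blast
      then show False using av[OF that] by simp
    qed
    have vB: "v \<notin> B" using sp(4) vA by blast
    have ab1: "\<forall>i\<in>{1..4}. is_path_ends E (P i) (a' i) (b' i) \<and>
                         P i \<inter> (A - {v}) = {a' i} \<and> P i \<inter> B = {b' i}"
      using ab(1) av by blast
    show ?thesis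
      unfolding semigate4_def
    proof (intro conjI)
      show "\<exists>a b. (\<forall>i\<in>{1..4}. is_path_ends E (P i) (a i) (b i) \<and>
                         P i \<inter> (A - {v}) = {a i} \<and> P i \<inter> B = {b i}) \<and>
            (\<forall>i\<in>{1..4}. \<forall>j\<in>{1..4}. i < j \<longrightarrow>
                P i \<noteq> P j \<and> P i \<inter> P j = {a i, b i} \<inter> {a j, b j})"
        using ab1 ab(2) by blast
      show "connected_set E (A - {v})" by (rule connv)
      have ind: "\<forall>u w. E u w \<and> u \<in> A \<union> B \<union> (\<Union>i\<in>{1..4}. P i) \<and> w \<in> A \<union> B \<union> (\<Union>i\<in>{1..4}. P i)
        \<longrightarrow> (u \<in> A \<and> w \<in> A) \<or> (u \<in> B \<and> w \<in> B) \<or> (\<exists>i\<in>{1..4}. u \<in> P i \<and> w \<in> P i)"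
        using sp(10) by blast
      show "\<forall>u w. E u w \<and> u \<in> (A - {v}) \<union> B \<union> (\<Union>i\<in>{1..4}. P i) \<and> w \<in> (A - {v}) \<union> B \<union> (\<Union>i\<in>{1..4}. P i)
        \<longrightarrow> (u \<in> A - {v} \<and> w \<in> A - {v}) \<or> (u \<in> B \<and> w \<in> B) \<or> (\<exists>i\<in>{1..4}. u \<in> P i \<and> w \<in> P i)"
      proof (intro allI impI)
        fix u w
        assume H: "E u w \<and> u \<in> (A - {v}) \<union> B \<union> (\<Union>i\<in>{1..4}. P i) \<and> w \<in> (A - {v}) \<union> B \<union> (\<Union>i\<in>{1..4}. P i)"
        then have uv: "u \<noteq> v" and wv: "w \<noteq> v" using pv vB by auto
        show "(u \<in> A - {v} \<and> w \<in> A - {v}) \<or> (u \<in> B \<and> w \<in> B) \<or> (\<exists>i\<in>{1..4}. u \<in> P i \<and> w \<in> P i)"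
        proof -
          have "u \<in> A \<union> B \<union> (\<Union>i\<in>{1..4}. P i)" "w \<in> A \<union> B \<union> (\<Union>i\<in>{1..4}. P i)" "E u w"
            using H by auto
          then have "(u \<in> A \<and> w \<in> A) \<or> (u \<in> B \<and> w \<in> B) \<or> (\<exists>i\<in>{1..4}. u \<in> P i \<and> w \<in> P i)"
            using ind by (elim allE impE) (intro conjI)
          then show ?thesis
          proof (elim disjE)
            assume "u \<in> A \<and> w \<in> A" then show ?thesis using uv wv by simp
          qed simp_all
        qed
      qed
      show "A - {v} \<subseteq> V" using sp(1) by blast
      show "B \<subseteq> V" by (rule sp(2))
      show "\<forall>i\<in>{1..4}. P i \<subseteq> V" by (rule sp(3))
      show "(A - {v}) \<inter> B = {}" using sp(4) by blast
      show "connected_set E B" by (rule sp(6))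
      show "\<forall>x\<in>A - {v}. \<forall>y\<in>B. \<forall>y'\<in>B. E x y \<and> E x y' \<longrightarrow> y = y'" using sp(8) by blast
      show "\<forall>y\<in>B. \<forall>x\<in>A - {v}. \<forall>x'\<in>A - {v}. E y x \<and> E y x' \<longrightarrow> x = x'" using sp(9) by blast
    qed
  qed
  have "strictly_better4 (A - {v}) B P A B P" unfolding strictly_better4_def using vA by auto
  moreover have "\<not> (\<exists>A' B' P'. semigate4 V E A' B' P' \<and> strictly_better4 A' B' P' A B P)"
    using gate unfolding gate4_def by (elim conjE)
  ultimately show False using semi2 by blast
qed



lemma all4: "(\<forall>i<Suc (Suc (Suc (Suc 0))). Q i) = (Q 0 \<and> Q (Suc 0) \<and> Q (Suc (Suc 0)) \<and> Q (Suc (Suc (Suc 0))))"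
  by (simp only: All_less_Suc not_less0) auto

lemma hole4:
  assumes G: "graph V E" and inV: "x \<in> V" "x' \<in> V" "y \<in> V" "y' \<in> V"
    and d: "distinct [x, x', y', y]"
    and e: "E x x'" "E x' y'" "E y' y" "E y x" and ne: "\<not> E x y'" "\<not> E x' y"
  shows "is_hole V E [x, x', y', y]"
proof -
  have sym: "\<And>a b. E a b \<Longrightarrow> E b a" and irr: "\<And>a. \<not> E a a" using G unfolding graph_def by auto
  have ne': "\<not> E y' x" "\<not> E y x'" using ne sym by auto
  have e': "E x' x" "E y' x'" "E y y'" "E x y" using e sym by auto
  show ?thesis unfolding is_hole_def
    using d inV e e' ne ne' irr by (simp add: all4)
qed



context
  fixes E :: "'a \<Rightarrow> 'a \<Rightarrow> bool" and A V :: "'a set" and l :: nat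
  assumes G: "graph V E" and hol: "holed l V E" and l5: "5 \<le> l" and AV: "A \<subseteq> V"
    and sym: "\<forall>x y. E x y \<longrightarrow> E y x" and conn: "connected_set E A"
begin

abbreviation "DD \<equiv> dist_in E A"

lemmas dsym = dist_sym[OF sym conn]
lemmas dtri = dist_tri[OF sym conn]
lemmas dedge = dist_edge[OF sym conn]
lemmas gex = geo_exists[OF sym conn]
lemmas gidx = geo_idx[OF sym conn]
lemmas gmem = geo_mem[OF sym conn]
lemmas gadj = geo_adj[OF sym conn]
lemmas cross = crossing[OF sym conn]

lemma wlk_basic:
  assumes g: "wlk E A u v n xs"
  shows "set xs \<subseteq> A" "u \<in> set xs" "v \<in> set xs" "xs ! 0 = u" "xs \<noteq> []"
proof -
  have L: "length xs = Suc n" and h: "hd xs = u" and la: "last xs = v" and S: "set xs \<subseteq> A"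
    using g unfolding wlk_def by auto
  have ne: "xs \<noteq> []" using L by auto
  show "set xs \<subseteq> A" "xs \<noteq> []" using S ne by auto
  show "u \<in> set xs" using h ne hd_in_set by blast
  show "v \<in> set xs" using la ne last_in_set by blast
  show "xs ! 0 = u" using h ne by (cases xs) auto
qed

lemma arith_fin:
  fixes S1 S2 S3 :: nat and r1 r2 :: int
  assumes "int S2 = int S1 + 2 - r1" "int S3 = int S1 + 2 - r2"
    "0 \<le> r1" "r1 \<le> 2" "0 \<le> r2" "r2 \<le> 2" "r1 = 0 \<Longrightarrow> r2 = 0" "r2 = 0 \<Longrightarrow> r1 = 0"
  shows "(S1 = S2 \<and> S3 \<le> S1 + 1) \<or> (S1 = S3 \<and> S2 \<le> S1 + 1) \<or> (S2 = S3 \<and> S1 \<le> S2 + 1)"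
proof -
  have "r1 = 0 \<or> r1 = 1 \<or> r1 = 2" "r2 = 0 \<or> r2 = 1 \<or> r2 = 2" using assms(3-6) by linarith+
  then show ?thesis using assms by auto
qed

lemma core:
  assumes minA: "\<And>C. C \<subseteq> A \<Longrightarrow> connected_set E C \<Longrightarrow> a1 \<in> C \<Longrightarrow> a2 \<in> C \<Longrightarrow> a3 \<in> C \<Longrightarrow> a4 \<in> C \<Longrightarrow> C = A"
    and ins: "a1 \<in> A" "a2 \<in> A" "a3 \<in> A" "a4 \<in> A"
    and m1: "DD a1 a2 + DD a3 a4 \<le> DD a1 a3 + DD a2 a4"
    and m2: "DD a1 a2 + DD a3 a4 \<le> DD a1 a4 + DD a2 a3"
  shows "(DD a1 a2 + DD a3 a4 = DD a1 a3 + DD a2 a4 \<and> DD a1 a4 + DD a2 a3 \<le> DD a1 a2 + DD a3 a4 + 1) \<or>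
         (DD a1 a2 + DD a3 a4 = DD a1 a4 + DD a2 a3 \<and> DD a1 a3 + DD a2 a4 \<le> DD a1 a2 + DD a3 a4 + 1) \<or>
         (DD a1 a3 + DD a2 a4 = DD a1 a4 + DD a2 a3 \<and> DD a1 a2 + DD a3 a4 \<le> DD a1 a3 + DD a2 a4 + 1)"
proof -
  obtain Q where gQ: "wlk E A a1 a2 (DD a1 a2) Q" using gex ins by blast
  obtain R where gR: "wlk E A a3 a4 (DD a3 a4) R" using gex ins by blast
  define m where "m = DD a1 a2"
  define n where "n = DD a3 a4"
  note Qb = wlk_basic[OF gQ] and Rb = wlk_basic[OF gR]
  have Qd: "DD a1 x \<le> m" "DD x a2 = m - DD a1 x" "x = Q ! (DD a1 x)" if "x \<in> set Q" for x
    using gmem[OF gQ that] unfolding m_def by auto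
  have Rd: "DD a3 y \<le> n" "DD y a4 = n - DD a3 y" "y = R ! (DD a3 y)" if "y \<in> set R" for y
    using gmem[OF gR that] unfolding n_def by auto
  consider (c1) "set Q \<inter> set R \<noteq> {}"
    | (c2) "set Q \<inter> set R = {}" "\<exists>x\<in>set Q. \<exists>y\<in>set R. E x y"
    | (c3) "set Q \<inter> set R = {}" "\<not> (\<exists>x\<in>set Q. \<exists>y\<in>set R. E x y)" by blast
  then show ?thesis
  proof cases
    case c1
    then obtain x where xQ: "x \<in> set Q" and xR: "x \<in> set R" by blast
    have xA: "x \<in> A" using xQ Qb by auto
    have "DD a1 a3 \<le> DD a1 x + DD x a3" using dtri ins xA by blast
    moreover have "DD a2 a4 \<le> DD a2 x + DD x a4" using dtri ins xA by blast
    moreover have "DD a1 a4 \<le> DD a1 x + DD x a4" using dtri ins xA by blast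
    moreover have "DD a2 a3 \<le> DD a2 x + DD x a3" using dtri ins xA by blast
    moreover have "DD a1 x + DD x a2 = m" using Qd[OF xQ] by auto
    moreover have "DD a3 x + DD x a4 = n" using Rd[OF xR] by auto
    moreover have "DD x a3 = DD a3 x" "DD a2 x = DD x a2" using dsym by auto
    ultimately show ?thesis using m1 m2 unfolding m_def n_def by linarith
  next
    case c2
    have cQR: "connected_set E (set Q \<union> set R)"
      using conn_union[OF sym conn_list[OF sym gQ] conn_list[OF sym gR]] c2(2) by blast
    have CA: "set Q \<union> set R = A"
      using minA[OF _ cQR] Qb Rb by auto
    define p where "p x = DD a1 x" for x
    define s where "s y = DD a3 y" for y
    have ub: "DD a1 a3 \<le> p x + 1 + s y \<and> DD a2 a4 \<le> (m - p x) + 1 + (n - s y) \<and>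
              DD a1 a4 \<le> p x + 1 + (n - s y) \<and> DD a2 a3 \<le> (m - p x) + 1 + s y"
      if "x \<in> set Q" "y \<in> set R" "E x y" for x y
    proof -
      have xA: "x \<in> A" and yA: "y \<in> A" using that Qb Rb by auto
      have dxy: "DD x y \<le> 1" using dedge that xA yA by blast
      have t1: "DD a1 a3 \<le> DD a1 x + DD x a3" "DD x a3 \<le> DD x y + DD y a3"
        "DD a2 a4 \<le> DD a2 x + DD x a4" "DD x a4 \<le> DD x y + DD y a4"
        "DD a1 a4 \<le> DD a1 x + DD x a4" "DD a2 a3 \<le> DD a2 x + DD x a3"
        using dtri ins xA yA by blast+
      have e: "DD y a3 = s y" "DD a2 x = m - p x" "DD y a4 = n - s y"
        using dsym Qd[OF that(1)] Rd[OF that(2)] unfolding p_def s_def by auto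
      show ?thesis using t1 e dxy unfolding p_def by linarith
    qed
    have a3Q: "a3 \<notin> set Q" "a4 \<notin> set Q" using Rb c2(1) by auto
    have inR: "y \<in> set R" if "y \<in> A" "y \<notin> set Q" for y using CA that by blast
    obtain x1 y1 where w1: "x1 \<in> set Q" "y1 \<in> set R" "E x1 y1" "DD a1 a3 = DD a1 x1 + 1 + DD y1 a3"
      using cross[of a1 "set Q" a3] Qb a3Q ins inR by metis
    obtain x2 y2 where w2: "x2 \<in> set Q" "y2 \<in> set R" "E x2 y2" "DD a2 a4 = DD a2 x2 + 1 + DD y2 a4"
      using cross[of a2 "set Q" a4] Qb a3Q ins inR by metis
    obtain x3 y3 where w3: "x3 \<in> set Q" "y3 \<in> set R" "E x3 y3" "DD a1 a4 = DD a1 x3 + 1 + DD y3 a4"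
      using cross[of a1 "set Q" a4] Qb a3Q ins inR by metis
    obtain x4 y4 where w4: "x4 \<in> set Q" "y4 \<in> set R" "E x4 y4" "DD a2 a3 = DD a2 x4 + 1 + DD y4 a3"
      using cross[of a2 "set Q" a3] Qb a3Q ins inR by metis
    have eq1: "DD a1 a3 = p x1 + 1 + s y1" using w1 dsym unfolding p_def s_def by metis
    have eq2: "DD a2 a4 = (m - p x2) + 1 + (n - s y2)" using w2 dsym Qd[OF w2(1)] Rd[OF w2(2)] unfolding p_def s_def by metis
    have eq3: "DD a1 a4 = p x3 + 1 + (n - s y3)" using w3 dsym Rd[OF w3(2)] unfolding p_def s_def by metis
    have eq4: "DD a2 a3 = (m - p x4) + 1 + s y4" using w4 dsym Qd[OF w4(1)] unfolding p_def s_def by metis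
    have rng: "p x1 \<le> m" "p x2 \<le> m" "p x3 \<le> m" "p x4 \<le> m" "s y1 \<le> n" "s y2 \<le> n" "s y3 \<le> n" "s y4 \<le> n"
      using Qd w1 w2 w3 w4 Rd unfolding p_def s_def by auto
    have noC4: False
      if "x \<in> set Q" "x' \<in> set Q" "y \<in> set R" "y' \<in> set R" "p x' = Suc (p x)"
        "s y = Suc (s y') \<or> s y' = Suc (s y)" "E x y" "E x' y'" "\<not> E x y'" "\<not> E x' y" for x x' y y'
    proof -
      have px: "p x < m" using that(5) Qd[OF that(2)] unfolding p_def by auto
      have "x = Q ! p x" "x' = Q ! Suc (p x)" using Qd that unfolding p_def by metis+
      then have exx: "E x x'" using gadj[OF gQ, of "p x"] px unfolding m_def by simp
      have eyy: "E y' y"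
      proof (cases "s y = Suc (s y')")
        case True
        have sy: "s y' < n" using True Rd[OF that(3)] unfolding s_def by auto
        have "y' = R ! s y'" "y = R ! Suc (s y')" using Rd that True unfolding s_def by metis+
        then show ?thesis using gadj[OF gR, of "s y'"] sy unfolding n_def by simp
      next
        case False
        then have F: "s y' = Suc (s y)" using that(6) by auto
        have sy: "s y < n" using F Rd[OF that(4)] unfolding s_def by auto
        have "y = R ! s y" "y' = R ! Suc (s y)" using Rd that F unfolding s_def by metis+
        then have "E y y'" using gadj[OF gR, of "s y"] sy unfolding n_def by simp
        then show ?thesis using sym by blast
      qed
      have dxy: "x \<noteq> x'" using that(5) by auto
      have dyy: "y \<noteq> y'" using that(6) by auto
      have "distinct [x, x', y', y]" using dxy dyy that(1-4) c2(1) by auto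
      moreover have "x \<in> V" "x' \<in> V" "y \<in> V" "y' \<in> V" using that(1-4) Qb Rb AV by auto
      moreover have "E y x" using that(7) sym by blast
      ultimately have "is_hole V E [x, x', y', y]"
        using hole4[OF G] exx that(8) eyy that(9,10) by blast
      then have "length [x, x', y', y] = l" using hol unfolding holed_def by blast
      then show False using l5 by simp
    qed
    note ub1 = ub[OF w1(1-3)] and ub2 = ub[OF w2(1-3)] and ub3 = ub[OF w3(1-3)] and ub4 = ub[OF w4(1-3)]
    have A1: "\<not> (p x1 + s y1 = p x2 + s y2 \<and> int (p x4) - int (s y4) = int (p x3) - int (s y3) + 2)"
    proof
      assume H: "p x1 + s y1 = p x2 + s y2 \<and> int (p x4) - int (s y4) = int (p x3) - int (s y3) + 2"
      have pp: "p x4 = Suc (p x3)" "s y3 = Suc (s y4)"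
        using H ub3 ub4 eq1 eq2 rng by linarith+
      have n1: "\<not> E x3 y4"
      proof
        assume "E x3 y4" then show False using ub[OF w3(1) w4(2)] eq1 H pp ub3 eq2 rng by linarith
      qed
      have n2: "\<not> E x4 y3"
      proof
        assume "E x4 y3" then show False using ub[OF w4(1) w3(2)] eq2 H pp ub3 eq1 rng by linarith
      qed
      show False using noC4[OF w3(1) w4(1) w3(2) w4(2) pp(1) _ w3(3) w4(3) n1 n2] pp(2) by blast
    qed
    have A2: "\<not> (int (p x3) - int (s y3) = int (p x4) - int (s y4) \<and> p x2 + s y2 = p x1 + s y1 + 2)"
    proof
      assume H: "int (p x3) - int (s y3) = int (p x4) - int (s y4) \<and> p x2 + s y2 = p x1 + s y1 + 2"
      have pp: "p x2 = Suc (p x1)" "s y2 = Suc (s y1)"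
        using H ub1 ub2 eq3 eq4 rng by linarith+
      have n1: "\<not> E x1 y2"
      proof
        assume "E x1 y2" then show False using ub[OF w1(1) w2(2)] eq3 H pp ub1 eq4 rng by linarith
      qed
      have n2: "\<not> E x2 y1"
      proof
        assume "E x2 y1" then show False using ub[OF w2(1) w1(2)] eq4 H pp ub1 eq3 rng by linarith
      qed
      show False using noC4[OF w1(1) w2(1) w1(2) w2(2) pp(1) _ w1(3) w2(3) n1 n2] pp(2) by blast
    qed
    define r1 where "r1 = int (p x2 + s y2) - int (p x1 + s y1)"
    define r2 where "r2 = (int (p x4) - int (s y4)) - (int (p x3) - int (s y3))"
    have S2e: "int (DD a1 a3 + DD a2 a4) = int (m + n) + 2 - r1"
      using eq1 eq2 rng unfolding r1_def by linarith
    have S3e: "int (DD a1 a4 + DD a2 a3) = int (m + n) + 2 - r2"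
      using eq3 eq4 rng unfolding r2_def by linarith
    have r1b: "0 \<le> r1" "r1 \<le> 2" using ub2 eq1 eq2 rng S2e m1 unfolding r1_def m_def n_def by linarith+
    have r2b: "0 \<le> r2" "r2 \<le> 2" using ub3 eq3 eq4 rng S3e m2 unfolding r2_def m_def n_def by linarith+
    have i1: "r2 = 0" if "r1 = 0"
    proof -
      have "p x3 + s y3 = p x1 + s y1" "p x4 + s y4 = p x1 + s y1"
        using that ub3 ub4 eq1 eq2 rng unfolding r1_def by linarith+
      then have "int (p x3) + int (s y3) = int (p x4) + int (s y4)" by (metis of_nat_add)
      then have "r2 = 2 * (int (p x4) - int (p x3))" unfolding r2_def by (smt (verit))
      then have "r2 = 0 \<or> r2 = 2" using r2b by presburger
      moreover have "r2 \<noteq> 2" using A1 that unfolding r1_def r2_def by linarith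
      ultimately show ?thesis by blast
    qed
    have i2: "r1 = 0" if "r2 = 0"
    proof -
      have "int (p x1) - int (s y1) = int (p x3) - int (s y3)" "int (p x2) - int (s y2) = int (p x3) - int (s y3)"
        using that ub1 ub2 eq3 eq4 rng unfolding r2_def by linarith+
      then have "r1 = 2 * (int (p x2) - int (p x1))" unfolding r1_def by (smt (verit) of_nat_add)
      then have "r1 = 0 \<or> r1 = 2" using r1b by presburger
      moreover have "r1 \<noteq> 2" using A2 that unfolding r1_def r2_def by linarith
      ultimately show ?thesis by blast
    qed
    have S2e': "int (DD a1 a3 + DD a2 a4) = int (DD a1 a2 + DD a3 a4) + 2 - r1" using S2e unfolding m_def n_def .
    have S3e': "int (DD a1 a4 + DD a2 a3) = int (DD a1 a2 + DD a3 a4) + 2 - r2" using S3e unfolding m_def n_def .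
    show ?thesis
      by (rule arith_fin[of "DD a1 a3 + DD a2 a4" "DD a1 a2 + DD a3 a4" r1 "DD a1 a4 + DD a2 a3" r2, OF S2e' S3e' r1b r2b i1 i2])
  next
    case c3
    define cand where "cand c z \<longleftrightarrow> c \<in> A \<and> c \<notin> set Q \<and> (\<exists>x\<in>set Q. E x c) \<and> z \<in> set R" for c z
    have a3Q: "a3 \<notin> set Q" "a4 \<notin> set Q" using Rb c3(1) by auto
    obtain x0 y0 where "x0 \<in> set Q" "y0 \<in> A" "y0 \<notin> set Q" "E x0 y0"
      using cross[of a1 "set Q" a3] Qb a3Q ins by metis
    then have "cand y0 a3" unfolding cand_def using Rb by blast
    then obtain cz where czc: "cand (fst cz) (snd cz)" and czm: "\<forall>q. cand (fst q) (snd q) \<longrightarrow> DD (fst cz) (snd cz) \<le> DD (fst q) (snd q)"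
      using ex_has_least_nat[of "\<lambda>q. cand (fst q) (snd q)" "(y0, a3)" "\<lambda>q. DD (fst q) (snd q)"] by auto
    obtain c z where cz: "cz = (c, z)" by (cases cz)
    have cc: "cand c z" using czc cz by simp
    have cm: "DD c z \<le> DD c' z'" if "cand c' z'" for c' z' using czm that cz by (metis fst_conv snd_conv)
    have cA: "c \<in> A" and zR: "z \<in> set R" and cQ: "c \<notin> set Q" using cc unfolding cand_def by auto
    obtain xc where xc: "xc \<in> set Q" "E xc c" using cc unfolding cand_def by auto
    have zA: "z \<in> A" using zR Rb by auto
    obtain Z where gZ: "wlk E A c z (DD c z) Z" using gex cA zA by blast
    note Zb = wlk_basic[OF gZ]
    have c1: "connected_set E (set Q \<union> set Z)"
      using conn_union[OF sym conn_list[OF sym gQ] conn_list[OF sym gZ]] xc Zb by blast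
    have c2: "connected_set E ((set Q \<union> set Z) \<union> set R)"
      using conn_union[OF sym c1 conn_list[OF sym gR]] Zb zR by blast
    have CA: "set Q \<union> set Z \<union> set R = A"
      using minA[OF _ c2] Qb Rb Zb by auto
    have only: "y = c" if "x \<in> set Q" "y \<in> A" "y \<notin> set Q" "E x y" for x y
    proof -
      have "y \<notin> set R" using c3(2) that by blast
      then have yZ: "y \<in> set Z" using CA that by blast
      have g: "y = Z ! DD c y" "DD c y \<le> DD c z" "DD y z = DD c z - DD c y" using gmem[OF gZ yZ] by auto
      have "cand y z" unfolding cand_def using that zR by blast
      then have "DD c z \<le> DD y z" by (rule cm)
      then have "DD c y = 0" using g by linarith
      then show "y = c" using g Zb by simp
    qed
    have split: "DD u v = DD u c + DD c v" if uQ: "u \<in> set Q" and vR: "v \<in> set R" for u v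
    proof -
      have uA: "u \<in> A" and vA: "v \<in> A" using uQ vR Qb Rb by auto
      have vQ: "v \<notin> set Q" using vR c3(1) by auto
      obtain x y where xy: "x \<in> set Q" "x \<in> A" "y \<in> A" "y \<notin> set Q" "E x y" "DD u v = DD u x + 1 + DD y v"
        using cross[OF uQ uA vA vQ] by blast
      have yc: "y = c" using only xy by blast
      have "DD u c \<le> DD u x + DD x c" using dtri uA xy cA by blast
      moreover have "DD x c \<le> 1" using dedge xy yc cA by blast
      moreover have "DD u v \<le> DD u c + DD c v" using dtri uA vA cA by blast
      moreover have "DD u v = DD u x + 1 + DD c v" using xy(6) yc by simp
      ultimately show ?thesis by linarith
    qed
    have "DD a1 a3 = DD a1 c + DD c a3" "DD a2 a4 = DD a2 c + DD c a4"
         "DD a1 a4 = DD a1 c + DD c a4" "DD a2 a3 = DD a2 c + DD c a3"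
      using split Qb Rb by auto
    then show ?thesis using m1 by linarith
  qed
qed

end


theorem mainTheorem7:
  fixes V :: "'a set" and E :: "'a \<Rightarrow> 'a \<Rightarrow> bool" and l :: nat
    and A B :: "'a set" and P :: "nat \<Rightarrow> 'a set" and a :: "nat \<Rightarrow> 'a"
  assumes "l \<ge> 5"
    and "graph V E"
    and "holed l V E"
    and "gate4 V E A B P"
    and "\<forall>i\<in>{1..4}. P i \<inter> A = {a i}"
  shows "let d1234 = dist_in E A (a 1) (a 2) + dist_in E A (a 3) (a 4);
             d1324 = dist_in E A (a 1) (a 3) + dist_in E A (a 2) (a 4);
             d1423 = dist_in E A (a 1) (a 4) + dist_in E A (a 2) (a 3)
         in (d1234 = d1324 \<and> d1423 \<le> d1234 + 1) \<or>
            (d1234 = d1423 \<and> d1324 \<le> d1234 + 1) \<or>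
            (d1324 = d1423 \<and> d1234 \<le> d1324 + 1)"
proof -
  note l5 = assms(1) and G = assms(2) and hol = assms(3) and gate = assms(4) and aP = assms(5)
  have sym: "\<forall>x y. E x y \<longrightarrow> E y x" using G unfolding graph_def by auto
  have semi: "semigate4 V E A B P" using gate unfolding gate4_def by auto
  have conn: "connected_set E A" and AV: "A \<subseteq> V" using semi_parts[OF semi] by blast+
  have ins: "a i \<in> A" if "i \<in> {1..4}" for i using aP that by blast
  have i4: "i \<in> {1..4} \<Longrightarrow> i = 1 \<or> i = 2 \<or> i = 3 \<or> i = 4" for i :: nat by auto
  have minA: "C = A" if "C \<subseteq> A" "connected_set E C" "a 1 \<in> C" "a 2 \<in> C" "a 3 \<in> C" "a 4 \<in> C" for C
  proof (rule gate_min[OF G gate aP that(1,2)])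
    show "\<forall>i\<in>{1..4}. a i \<in> C" using that(3-6) i4 by blast
  qed
  have in4: "a 1 \<in> A" "a 2 \<in> A" "a 3 \<in> A" "a 4 \<in> A" using ins by auto
  note cr = core[OF G hol l5 AV sym conn]
  note ds = dist_sym[OF sym conn]
  let ?D = "dist_in E A"
  have "(?D (a 1) (a 2) + ?D (a 3) (a 4) = ?D (a 1) (a 3) + ?D (a 2) (a 4) \<and> ?D (a 1) (a 4) + ?D (a 2) (a 3) \<le> ?D (a 1) (a 2) + ?D (a 3) (a 4) + 1) \<or>
        (?D (a 1) (a 2) + ?D (a 3) (a 4) = ?D (a 1) (a 4) + ?D (a 2) (a 3) \<and> ?D (a 1) (a 3) + ?D (a 2) (a 4) \<le> ?D (a 1) (a 2) + ?D (a 3) (a 4) + 1) \<or>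
        (?D (a 1) (a 3) + ?D (a 2) (a 4) = ?D (a 1) (a 4) + ?D (a 2) (a 3) \<and> ?D (a 1) (a 2) + ?D (a 3) (a 4) \<le> ?D (a 1) (a 3) + ?D (a 2) (a 4) + 1)"
    (is "?G")
  proof -
    consider (s1) "?D (a 1) (a 2) + ?D (a 3) (a 4) \<le> ?D (a 1) (a 3) + ?D (a 2) (a 4)"
                  "?D (a 1) (a 2) + ?D (a 3) (a 4) \<le> ?D (a 1) (a 4) + ?D (a 2) (a 3)"
      | (s2) "?D (a 1) (a 3) + ?D (a 2) (a 4) \<le> ?D (a 1) (a 2) + ?D (a 3) (a 4)"
                  "?D (a 1) (a 3) + ?D (a 2) (a 4) \<le> ?D (a 1) (a 4) + ?D (a 2) (a 3)"
      | (s3) "?D (a 1) (a 4) + ?D (a 2) (a 3) \<le> ?D (a 1) (a 2) + ?D (a 3) (a 4)"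
                  "?D (a 1) (a 4) + ?D (a 2) (a 3) \<le> ?D (a 1) (a 3) + ?D (a 2) (a 4)"
      by linarith
    then show ?G
    proof cases
      case s1
      show ?G by (rule cr[OF minA in4 s1]) auto
    next
      case s2
      have m1: "?D (a 1) (a 3) + ?D (a 2) (a 4) \<le> ?D (a 1) (a 2) + ?D (a 3) (a 4)" using s2 by simp
      have m2: "?D (a 1) (a 3) + ?D (a 2) (a 4) \<le> ?D (a 1) (a 4) + ?D (a 3) (a 2)" using s2 ds[of "a 3" "a 2"] by simp
      have "C = A" if "C \<subseteq> A" "connected_set E C" "a 1 \<in> C" "a 3 \<in> C" "a 2 \<in> C" "a 4 \<in> C" for C
        using minA that by blast
      from cr[OF this in4(1,3,2,4) m1 m2] show ?G using ds[of "a 3" "a 2"] by arith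
    next
      case s3
      have m1: "?D (a 1) (a 4) + ?D (a 2) (a 3) \<le> ?D (a 1) (a 2) + ?D (a 4) (a 3)" using s3 ds[of "a 4" "a 3"] by simp
      have m2: "?D (a 1) (a 4) + ?D (a 2) (a 3) \<le> ?D (a 1) (a 3) + ?D (a 4) (a 2)" using s3 ds[of "a 4" "a 2"] by simp
      have "C = A" if "C \<subseteq> A" "connected_set E C" "a 1 \<in> C" "a 4 \<in> C" "a 2 \<in> C" "a 3 \<in> C" for C
        using minA that by blast
      from cr[OF this in4(1,4,2,3) m1 m2] show ?G using ds[of "a 4" "a 3"] ds[of "a 4" "a 2"] by arith
    qed
  qed
  then show ?thesis unfolding Let_def .
qed



end
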